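(* Let $X$ be a set of reals. Then $B(X)$ satisfies $S_{1}(\mathcal{D},\mathcal{D})$ if and only if $X$ satisfies $S_{1}(B_\Omega, B_\Omega)$.
   Context: $B(X)$ is the set of all real-valued Borel functions on $X$ with the topology of pointwise convergence. $S_1(\mathcal{A},\mathcal{B})$ means: for every sequence $(A_n:n\in\mathbb{N})$ of elements of $\mathcal{A}$ there are $b_n\in A_n$ with $\{b_n:n\in\mathbb{N}\}\in\mathcal{B}$. For the space $B(X)$, $\mathcal{D}$ is the family of all countable dense subsets of $B(X)$. A cover $\mathcal{U}$ of $X$ is an $\omega$-cover if $X\notin\mathcal{U}$ and every finite subset of $X$ is contained in some member of $\mathcal{U}$; $B_\Omega$ is the family of all countable $\omega$-covers of $X$ consisting of Borel sets. *)

theory Defs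
  imports "HOL-Analysis.Analysis"
begin

definition S1 :: "'a set set \<Rightarrow> 'a set set \<Rightarrow> bool" where
  "S1 \<A> \<B> \<longleftrightarrow>
     (\<forall>A :: nat \<Rightarrow> 'a set. (\<forall>n. A n \<in> \<A>) \<longrightarrow>
        (\<exists>b :: nat \<Rightarrow> 'a. (\<forall>n. b n \<in> A n) \<and> range b \<in> \<B>))"

text \<open>B(X): real-valued Borel functions on X (X with the subspace Borel structure),
  represented as functions extensional on X (undefined outside X).\<close>
definition Borel_functions :: "real set \<Rightarrow> (real \<Rightarrow> real) set" where
  "Borel_functions X =
     {f. f \<in> extensional X \<and> f \<in> borel_measurable (restrict_space borel X)}"

definition BX_top :: "real set \<Rightarrow> (real \<Rightarrow> real) topology" where
  "BX_top X = subtopology (product_topology (\<lambda>_. euclideanreal) X) (Borel_functions X)"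

definition dense_in :: "'a topology \<Rightarrow> 'a set \<Rightarrow> bool" where
  "dense_in T D \<longleftrightarrow> D \<subseteq> topspace T \<and> T closure_of D = topspace T"

definition countable_dense :: "'a topology \<Rightarrow> 'a set set" where
  "countable_dense T = {D. countable D \<and> dense_in T D}"

definition Borel_omega_covers :: "real set \<Rightarrow> real set set set" where
  "Borel_omega_covers X =
     {U. countable U \<and> (\<forall>u\<in>U. u \<in> sets (restrict_space borel X)) \<and> \<Union>U = X \<and>
         X \<notin> U \<and> (\<forall>F. finite F \<and> F \<subseteq> X \<longrightarrow> (\<exists>u\<in>U. F \<subseteq> u))}"

end

theory Submission
  imports Defs
begin

fun stepf :: "(rat \<times> rat \<times> rat) list \<Rightarrow> real \<Rightarrow> real" where
  "stepf [] x = 0"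
| "stepf ((a,b,c)#l) x = of_rat c * indicator {of_rat a<..<of_rat b} x + stepf l x"

lemma stepf_meas: "stepf l \<in> borel_measurable borel"
proof (induction l)
  case Nil then show ?case by simp
next
  case (Cons t l)
  obtain a b c where t: "t = (a,b,c)" by (cases t) auto
  have "(\<lambda>x. of_rat c * indicator {of_rat a<..<of_rat b} x + stepf l x) \<in> borel_measurable borel"
    using Cons by (intro borel_measurable_add borel_measurable_times) auto
  then show ?case unfolding t by (simp add: fun_eq_iff)
qed

lemma rat_between: "(x::real) < y \<Longrightarrow> \<exists>q. x < of_rat q \<and> of_rat q < y"
  by (metis Rats_cases Rats_dense_in_real)

lemma stepf_approx:
  assumes "finite F" "(e::real) > 0"
  shows "\<exists>l. \<forall>x\<in>F. \<bar>stepf l x - h x\<bar> < e"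
  using assms(1)
proof (induction F rule: finite_induct)
  case empty then show ?case by simp
next
  case (insert y F)
  then obtain l where l: "\<forall>x\<in>F. \<bar>stepf l x - h x\<bar> < e" by blast
  define \<delta> where "\<delta> = (if F = {} then 1 else Min ((\<lambda>z. \<bar>z - y\<bar>) ` F))"
  have d0: "\<delta> > 0" unfolding \<delta>_def using insert by auto
  have dF: "\<And>z. z \<in> F \<Longrightarrow> \<delta> \<le> \<bar>z - y\<bar>" unfolding \<delta>_def using insert by auto
  obtain a where a: "y - \<delta> < of_rat a" "of_rat a < y" using rat_between[of "y - \<delta>" y] d0 by auto
  obtain b where b: "y < of_rat b" "of_rat b < y + \<delta>" using rat_between[of y "y + \<delta>"] d0 by auto
  obtain c where c: "h y - stepf l y - e < of_rat c" "of_rat c < h y - stepf l y + e"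
    using rat_between[of "h y - stepf l y - e" "h y - stepf l y + e"] assms(2) by auto
  have "\<forall>x\<in>insert y F. \<bar>stepf ((a,b,c)#l) x - h x\<bar> < e"
  proof
    fix x assume "x \<in> insert y F"
    then consider "x = y" | "x \<in> F" by blast
    then show "\<bar>stepf ((a,b,c)#l) x - h x\<bar> < e"
    proof cases
      case 1 then show ?thesis using a b c by (auto simp: indicator_def)
    next
      case 2
      have "x \<notin> {of_rat a<..<of_rat b}" using dF[OF 2] a b by auto
      then show ?thesis using l 2 by simp
    qed
  qed
  then show ?case by blast
qed

definition Pset :: "real set \<Rightarrow> (real \<Rightarrow> real) set" where
  "Pset X = range (\<lambda>l. restrict (stepf l) X)"

lemma Pset_countable: "countable (Pset X)"
  unfolding Pset_def by simp

lemma Pset_Borel: "Pset X \<subseteq> Borel_functions X"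
proof
  fix p assume "p \<in> Pset X"
  then obtain l where p: "p = restrict (stepf l) X" unfolding Pset_def by blast
  have "stepf l \<in> borel_measurable (restrict_space borel X)"
    by (rule measurable_restrict_space1[OF stepf_meas])
  moreover have "\<And>x. x \<in> space (restrict_space borel X) \<Longrightarrow> p x = stepf l x"
    by (simp add: p space_restrict_space)
  ultimately have "p \<in> borel_measurable (restrict_space borel X)"
    by (metis (no_types) measurable_cong)
  then show "p \<in> Borel_functions X" unfolding Borel_functions_def p by simp
qed

lemma Pset_approx:
  assumes "finite F" "F \<subseteq> X" "(e::real) > 0"
  shows "\<exists>p\<in>Pset X. \<forall>x\<in>F. \<bar>p x - h x\<bar> < e"
proof -
  obtain l where "\<forall>x\<in>F. \<bar>stepf l x - h x\<bar> < e" using stepf_approx assms by blast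
  then show ?thesis using assms(2) unfolding Pset_def
    by (intro bexI[of _ "restrict (stepf l) X"]) auto
qed

lemma topspace_BX: "topspace (BX_top X) = Borel_functions X"
  unfolding BX_top_def Borel_functions_def by (auto simp: PiE_def)

lemma closure_BX:
  "f \<in> BX_top X closure_of S \<longleftrightarrow> f \<in> Borel_functions X \<and>
     (\<forall>F e. finite F \<and> F \<subseteq> X \<and> e > 0 \<longrightarrow>
        (\<exists>g\<in>S \<inter> Borel_functions X. \<forall>x\<in>F. \<bar>g x - f x\<bar> < e))"
proof
  assume f: "f \<in> BX_top X closure_of S"
  hence fB: "f \<in> Borel_functions X" unfolding in_closure_of topspace_BX by (rule conjunct1)
  show "f \<in> Borel_functions X \<and> (\<forall>F e. finite F \<and> F \<subseteq> X \<and> e > 0 \<longrightarrow>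
        (\<exists>g\<in>S \<inter> Borel_functions X. \<forall>x\<in>F. \<bar>g x - f x\<bar> < e))"
  proof (intro conjI fB allI impI)
    fix F e assume H: "finite F \<and> F \<subseteq> X \<and> (e::real) > 0"
    let ?P = "product_topology (\<lambda>_. euclideanreal) X"
    define T where "T = topspace ?P \<inter> \<Inter>((\<lambda>x. {g\<in>topspace ?P. g x \<in> ball (f x) e}) ` F)"
    have oT: "openin ?P T" unfolding T_def
    proof (rule openin_Int_Inter)
      show "finite ((\<lambda>x. {g\<in>topspace ?P. g x \<in> ball (f x) e}) ` F)" using H by simp
      show "openin ?P (topspace ?P)" by (rule openin_topspace)
      fix Y assume "Y \<in> (\<lambda>x. {g\<in>topspace ?P. g x \<in> ball (f x) e}) ` F"
      then obtain x where x: "x \<in> F" and Y: "Y = {g\<in>topspace ?P. g x \<in> ball (f x) e}" by blast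
      have "continuous_map ?P euclideanreal (\<lambda>g. g x)"
        using x H by (intro continuous_map_product_projection) auto
      then show "openin ?P Y" unfolding Y by (rule openin_continuous_map_preimage) simp
    qed
    have "f \<in> T \<inter> Borel_functions X" unfolding T_def using fB H
      by (auto simp: Borel_functions_def PiE_def)
    moreover have "openin (BX_top X) (T \<inter> Borel_functions X)"
      unfolding BX_top_def openin_subtopology using oT by blast
    ultimately obtain g where g: "g \<in> S" "g \<in> T \<inter> Borel_functions X"
      using f unfolding in_closure_of by blast
    have "\<forall>x\<in>F. \<bar>f x - g x\<bar> < e" using g(2) unfolding T_def by (auto simp: dist_real_def)
    then have "\<forall>x\<in>F. \<bar>g x - f x\<bar> < e" by (simp add: abs_minus_commute)
    then show "\<exists>g\<in>S \<inter> Borel_functions X. \<forall>x\<in>F. \<bar>g x - f x\<bar> < e"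
      using g by blast
  qed
next
  assume A: "f \<in> Borel_functions X \<and> (\<forall>F e. finite F \<and> F \<subseteq> X \<and> e > 0 \<longrightarrow>
        (\<exists>g\<in>S \<inter> Borel_functions X. \<forall>x\<in>F. \<bar>g x - f x\<bar> < e))"
  show "f \<in> BX_top X closure_of S"
    unfolding in_closure_of topspace_BX
  proof (intro conjI allI impI)
    show "f \<in> Borel_functions X" using A by blast
    fix T assume T: "f \<in> T \<and> openin (BX_top X) T"
    then obtain T' where oT': "openin (product_topology (\<lambda>_. euclideanreal) X) T'"
      and TT: "T = T' \<inter> Borel_functions X"
      unfolding BX_top_def openin_subtopology by blast
    have "f \<in> T'" using T TT by blast
    then obtain U where U: "finite {i \<in> X. U i \<noteq> UNIV}" "\<forall>i\<in>X. open (U i)"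
       "f \<in> Pi\<^sub>E X U" "Pi\<^sub>E X U \<subseteq> T'"
      using oT' unfolding openin_product_topology_alt by auto
    define F where "F = {i \<in> X. U i \<noteq> UNIV}"
    have "\<forall>i\<in>F. \<exists>d>0. ball (f i) d \<subseteq> U i"
      using U unfolding F_def by (auto simp: open_contains_ball PiE_def Pi_def)
    then obtain d where d: "\<And>i. i \<in> F \<Longrightarrow> d i > 0 \<and> ball (f i) (d i) \<subseteq> U i" by metis
    define e where "e = (if F = {} then 1 else Min (d ` F))"
    have e0: "e > 0" unfolding e_def using d U(1) F_def by auto
    have eF: "\<And>i. i \<in> F \<Longrightarrow> e \<le> d i" unfolding e_def using U(1) F_def by auto
    obtain g where g: "g \<in> S" "g \<in> Borel_functions X" "\<forall>x\<in>F. \<bar>g x - f x\<bar> < e"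
      using A U(1) e0 unfolding F_def by blast
    have "g \<in> Pi\<^sub>E X U"
    proof -
      have "g \<in> extensional X" using g(2) by (simp add: Borel_functions_def)
      moreover have "g i \<in> U i" if "i \<in> X" for i
      proof (cases "i \<in> F")
        case True
        then have "g i \<in> ball (f i) (d i)" using g(3) eF[OF True]
          by (auto simp: dist_real_def abs_minus_commute)
        then show ?thesis using d True by blast
      next
        case False then show ?thesis using that F_def by auto
      qed
      ultimately show ?thesis by (auto simp: PiE_def)
    qed
    then show "\<exists>y. y \<in> S \<and> y \<in> T" using g U(4) TT by blast
  qed
qed


lemma sets_rs_subset: "u \<in> sets (restrict_space borel X) \<Longrightarrow> u \<subseteq> X"
  using sets.sets_into_space[of u "restrict_space borel X"] by (simp add: space_restrict_space)

definition modf :: "real set \<Rightarrow> real set \<Rightarrow> (real \<Rightarrow> real) \<Rightarrow> real \<Rightarrow> real" where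
  "modf X u p = restrict (\<lambda>x. if x \<in> u then p x else 1) X"

lemma modf_Borel:
  assumes u: "u \<in> sets (restrict_space borel X)" and p: "p \<in> Borel_functions X"
  shows "modf X u p \<in> Borel_functions X"
proof -
  have "(\<lambda>x. if x \<in> u then p x else 1) \<in> borel_measurable (restrict_space borel X)"
  proof (rule measurable_If_set)
    show "p \<in> borel_measurable (restrict_space borel X)" using p by (simp add: Borel_functions_def)
    show "(\<lambda>x. 1::real) \<in> borel_measurable (restrict_space borel X)" by simp
    have "u \<inter> space (restrict_space borel X) = u" using sets_rs_subset[OF u]
      by (auto simp: space_restrict_space)
    then show "u \<inter> space (restrict_space borel X) \<in> sets (restrict_space borel X)" using u by simp
  qed
  moreover have "modf X u p \<in> borel_measurable (restrict_space borel X) \<longleftrightarrow>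
     (\<lambda>x. if x \<in> u then p x else 1) \<in> borel_measurable (restrict_space borel X)"
    by (rule measurable_cong) (simp add: modf_def space_restrict_space)
  ultimately have "modf X u p \<in> borel_measurable (restrict_space borel X)"
    by blast
  then show ?thesis unfolding Borel_functions_def modf_def by simp
qed

lemma dense_approx:
  assumes "D \<in> countable_dense (BX_top X)" "h \<in> Borel_functions X" "finite F" "F \<subseteq> X" "(e::real) > 0"
  shows "\<exists>g\<in>D. \<forall>x\<in>F. \<bar>g x - h x\<bar> < e"
proof -
  have "h \<in> BX_top X closure_of D" using assms(1,2)
    by (simp add: countable_dense_def dense_in_def topspace_BX)
  then show ?thesis using assms(3-5) unfolding closure_BX by blast
qed

lemma D_subset: "D \<in> countable_dense (BX_top X) \<Longrightarrow> D \<subseteq> Borel_functions X"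
  by (simp add: countable_dense_def dense_in_def topspace_BX)

lemma zero_Borel: "restrict (\<lambda>_. 0::real) X \<in> Borel_functions X"
proof -
  have "(\<lambda>_. 0::real) \<in> borel_measurable (restrict_space borel X)" by simp
  moreover have "restrict (\<lambda>_. 0::real) X \<in> borel_measurable (restrict_space borel X) \<longleftrightarrow>
     (\<lambda>_. 0::real) \<in> borel_measurable (restrict_space borel X)"
    by (rule measurable_cong) (simp add: space_restrict_space)
  ultimately have "restrict (\<lambda>_. 0::real) X \<in> borel_measurable (restrict_space borel X)"
    by blast
  then show ?thesis unfolding Borel_functions_def by simp
qed

lemma modD_dense:
  assumes U: "U \<in> Borel_omega_covers X"
  shows "(\<lambda>(u,p). modf X u p) ` (U \<times> Pset X) \<in> countable_dense (BX_top X)"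
proof -
  let ?D = "(\<lambda>(u,p). modf X u p) ` (U \<times> Pset X)"
  have cU: "countable U" using U unfolding Borel_omega_covers_def mem_Collect_eq by (rule conjunct1)
  have Us: "\<And>u. u \<in> U \<Longrightarrow> u \<in> sets (restrict_space borel X)"
    using U unfolding Borel_omega_covers_def mem_Collect_eq by blast
  have sub: "?D \<subseteq> Borel_functions X"
  proof
    fix g assume "g \<in> ?D"
    then obtain u p where up: "u \<in> U" "p \<in> Pset X" "g = modf X u p" by auto
    show "g \<in> Borel_functions X" unfolding up(3)
      by (rule modf_Borel[OF Us[OF up(1)]]) (use up(2) Pset_Borel in blast)
  qed
  have "Borel_functions X \<subseteq> BX_top X closure_of ?D"
  proof
    fix h assume h: "h \<in> Borel_functions X"
    show "h \<in> BX_top X closure_of ?D" unfolding closure_BX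
    proof (intro conjI h allI impI)
      fix F e assume H: "finite F \<and> F \<subseteq> X \<and> (e::real) > 0"
      obtain u where u: "u \<in> U" "F \<subseteq> u" using U H unfolding Borel_omega_covers_def by blast
      obtain p where p: "p \<in> Pset X" "\<forall>x\<in>F. \<bar>p x - h x\<bar> < e" using Pset_approx H by blast
      have "modf X u p \<in> ?D" by (intro image_eqI[where x="(u,p)"]) (simp_all add: u p)
      moreover have "\<forall>x\<in>F. \<bar>modf X u p x - h x\<bar> < e" using u p H by (auto simp: modf_def)
      ultimately show "\<exists>g\<in>?D \<inter> Borel_functions X. \<forall>x\<in>F. \<bar>g x - h x\<bar> < e" using sub by blast
    qed
  qed
  then have "BX_top X closure_of ?D = topspace (BX_top X)"
    using closure_of_subset_topspace[of "BX_top X" ?D] by (auto simp: topspace_BX)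
  moreover have "countable ?D" by (intro countable_image countable_SIGMA cU Pset_countable)
  ultimately show ?thesis using sub by (simp add: countable_dense_def dense_in_def topspace_BX)
qed

lemma dir1:
  assumes S: "S1 (countable_dense (BX_top X)) (countable_dense (BX_top X))"
  shows "S1 (Borel_omega_covers X) (Borel_omega_covers X)"
  unfolding S1_def
proof (intro allI impI)
  fix U :: "nat \<Rightarrow> real set set" assume U: "\<forall>n. U n \<in> Borel_omega_covers X"
  define D where "D n = (\<lambda>(u,p). modf X u p) ` (U n \<times> Pset X)" for n
  have "\<forall>n. D n \<in> countable_dense (BX_top X)" using U modD_dense unfolding D_def by blast
  then obtain b where b: "\<forall>n. b n \<in> D n" "range b \<in> countable_dense (BX_top X)"
    using S unfolding S1_def by blast
  have "\<forall>n. \<exists>u. u \<in> U n \<and> (\<exists>p. b n = modf X u p)" using b(1) unfolding D_def by fastforce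
  then obtain u where u': "\<forall>n. u n \<in> U n \<and> (\<exists>p. b n = modf X (u n) p)"
    using choice[of "\<lambda>n u. u \<in> U n \<and> (\<exists>p. b n = modf X u p)"] by blast
  have u: "\<And>n. u n \<in> U n" and up: "\<And>n. \<exists>p. b n = modf X (u n) p" using u' by auto
  have cov: "\<exists>n. F \<subseteq> u n" if F: "finite F" "F \<subseteq> X" for F
  proof -
    obtain g where g: "g \<in> range b" "\<forall>x\<in>F. \<bar>g x - restrict (\<lambda>_. 0::real) X x\<bar> < 1"
      using dense_approx[OF b(2) zero_Borel F(1) F(2) zero_less_one] by blast
    then obtain n where n: "g = b n" by blast
    obtain p where p: "b n = modf X (u n) p" using up by blast
    have "F \<subseteq> u n"
    proof
      fix x assume x: "x \<in> F"
      show "x \<in> u n"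
      proof (rule ccontr)
        assume "x \<notin> u n"
        then have "g x = 1" using n p x F by (simp add: modf_def subset_iff)
        moreover have "\<bar>g x - restrict (\<lambda>_. 0::real) X x\<bar> < 1" using g(2) x by blast
        moreover have "restrict (\<lambda>_. 0::real) X x = 0" using x F by auto
        ultimately show False by simp
      qed
    qed
    then show ?thesis by blast
  qed
  have uX: "u n \<subseteq> X" for n using u[of n] U sets_rs_subset unfolding Borel_omega_covers_def by blast
  have "range u \<in> Borel_omega_covers X"
    unfolding Borel_omega_covers_def
  proof (intro CollectI conjI ballI allI impI)
    show "countable (range u)" by simp
    show "v \<in> sets (restrict_space borel X)" if "v \<in> range u" for v
      using that u U unfolding Borel_omega_covers_def by blast
    show "\<Union>(range u) = X"
    proof
      show "\<Union>(range u) \<subseteq> X" using uX by blast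
      show "X \<subseteq> \<Union>(range u)"
      proof
        fix x assume "x \<in> X"
        then obtain n where "{x} \<subseteq> u n" using cov[of "{x}"] by auto
        then show "x \<in> \<Union>(range u)" by blast
      qed
    qed
    show "X \<notin> range u"
    proof (rule notI)
      assume "X \<in> range u"
      then obtain n where "X = u n" by blast
      then have "X \<in> U n" using u[of n] by simp
      moreover have "U n \<in> Borel_omega_covers X" using U by blast
      then have "X \<notin> U n" unfolding Borel_omega_covers_def mem_Collect_eq by blast
      ultimately show False by blast
    qed
    show "\<exists>v\<in>range u. F \<subseteq> v" if HF: "finite F \<and> F \<subseteq> X" for F
    proof -
      obtain n where "F \<subseteq> u n" using cov[of F] HF by blast
      then show ?thesis by blast
    qed
  qed
  then show "\<exists>b. (\<forall>n. b n \<in> U n) \<and> range b \<in> Borel_omega_covers X" using u by blast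
qed


lemma sublevel_Borel:
  assumes g: "g \<in> Borel_functions X" and f: "f \<in> Borel_functions X"
  shows "{x\<in>X. \<bar>g x - f x\<bar> < (r::real)} \<in> sets (restrict_space borel X)"
proof -
  have h: "(\<lambda>x. \<bar>g x - f x\<bar>) \<in> borel_measurable (restrict_space borel X)"
    using g f unfolding Borel_functions_def by (intro borel_measurable_abs borel_measurable_diff) auto
  have "(\<lambda>x. \<bar>g x - f x\<bar>) -` {..<r} \<inter> space (restrict_space borel X) \<in> sets (restrict_space borel X)"
    by (rule measurable_sets[OF h]) simp
  moreover have "(\<lambda>x. \<bar>g x - f x\<bar>) -` {..<r} \<inter> space (restrict_space borel X) = {x\<in>X. \<bar>g x - f x\<bar> < r}"
    by (auto simp: space_restrict_space)
  ultimately show ?thesis by simp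
qed

lemma selA:
  fixes D :: "nat \<Rightarrow> (real \<Rightarrow> real) set"
  assumes S: "S1 (Borel_omega_covers X) (Borel_omega_covers X)"
    and f: "f \<in> Borel_functions X" and D: "\<forall>m. D m \<in> countable_dense (BX_top X)"
  shows "\<exists>c. (\<forall>m. c m \<in> D m) \<and> f \<in> BX_top X closure_of range c"
proof -
  define ee where "ee m = 1 / real (Suc m)" for m
  have ee_pos: "ee m > 0" for m unfolding ee_def by simp
  have ee_mono: "m \<le> n \<Longrightarrow> ee n \<le> ee m" for m n unfolding ee_def by (simp add: frac_le)
  have ee_small: "\<exists>K. ee K < e" if "e > 0" for e
    using reals_Archimedean[OF that] unfolding ee_def by (simp add: inverse_eq_divide)
  have Dm: "D m \<in> countable_dense (BX_top X)" for m using D by blast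
  have Dne: "\<exists>g. g \<in> D m" for m
    using dense_approx[OF Dm f, of "{}" 1] by auto
  have Dsub: "D m \<subseteq> Borel_functions X" for m using D_subset[OF Dm] .
  have crit: "f \<in> BX_top X closure_of range c"
    if c1: "\<And>m. c m \<in> D m" and c2: "\<And>F e. finite F \<Longrightarrow> F \<subseteq> X \<Longrightarrow> e > 0 \<Longrightarrow> \<exists>m. \<forall>x\<in>F. \<bar>c m x - f x\<bar> < e"
    for c
    unfolding closure_BX
  proof (intro conjI f allI impI)
    fix F e assume H: "finite F \<and> F \<subseteq> X \<and> (e::real) > 0"
    then obtain m where m: "\<forall>x\<in>F. \<bar>c m x - f x\<bar> < e" using c2 by blast
    have "c m \<in> range c \<inter> Borel_functions X" using c1[of m] Dsub[of m] by blast
    then show "\<exists>g\<in>range c \<inter> Borel_functions X. \<forall>x\<in>F. \<bar>g x - f x\<bar> < e" using m by blast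
  qed
  define I where "I = {m. \<exists>g\<in>D m. \<forall>x\<in>X. \<bar>g x - f x\<bar> < ee m}"
  show ?thesis
  proof (cases "finite I")
    case False
    define c where "c m = (if m \<in> I then (SOME g. g \<in> D m \<and> (\<forall>x\<in>X. \<bar>g x - f x\<bar> < ee m))
        else (SOME g. g \<in> D m))" for m
    have cI: "c m \<in> D m \<and> (\<forall>x\<in>X. \<bar>c m x - f x\<bar> < ee m)" if "m \<in> I" for m
    proof -
      have "\<exists>g. g \<in> D m \<and> (\<forall>x\<in>X. \<bar>g x - f x\<bar> < ee m)" using that unfolding I_def by blast
      from someI_ex[OF this] show ?thesis using that unfolding c_def by simp
    qed
    have c1: "c m \<in> D m" for m
    proof (cases "m \<in> I")
      case True then show ?thesis using cI by blast
    next
      case False then show ?thesis unfolding c_def using someI_ex[OF Dne[of m]] by simp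
    qed
    have c2: "\<exists>m. \<forall>x\<in>F. \<bar>c m x - f x\<bar> < e" if HF: "finite F" "F \<subseteq> X" "e > 0" for F e
    proof -
      obtain K where K: "ee K < e" using ee_small[OF HF(3)] by blast
      obtain m where m: "m \<ge> K" "m \<in> I" using False unfolding infinite_nat_iff_unbounded_le by blast
      have "\<forall>x\<in>F. \<bar>c m x - f x\<bar> < e"
      proof
        fix x assume "x \<in> F"
        then have "\<bar>c m x - f x\<bar> < ee m" using cI[OF m(2)] HF(2) by blast
        also have "ee m \<le> ee K" using ee_mono[OF m(1)] .
        finally show "\<bar>c m x - f x\<bar> < e" using K by simp
      qed
      then show ?thesis by blast
    qed
    show ?thesis using crit[OF c1 c2] c1 by blast
  next
    case True
    then obtain N where N: "\<forall>m\<in>I. m \<le> N" unfolding finite_nat_set_iff_bounded_le by blast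
    define V where "V k g = {x\<in>X. \<bar>g x - f x\<bar> < ee (k + Suc N)}" for k and g :: "real \<Rightarrow> real"
    define U where "U k = V k ` D (k + Suc N)" for k
    have VX: "V k g \<subseteq> X" for k g unfolding V_def by blast
    have UB: "U k \<in> Borel_omega_covers X" for k
      unfolding Borel_omega_covers_def mem_Collect_eq
    proof (intro conjI ballI allI impI)
      have "countable (D (k + Suc N))" using Dm unfolding countable_dense_def by blast
      then show "countable (U k)" unfolding U_def by (rule countable_image)
      show "u \<in> sets (restrict_space borel X)" if "u \<in> U k" for u
      proof -
        obtain g where g: "g \<in> D (k + Suc N)" "u = V k g" using \<open>u \<in> U k\<close> unfolding U_def by blast
        show ?thesis unfolding g(2) V_def
          by (rule sublevel_Borel[OF _ f]) (use g(1) Dsub in blast)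
      qed
      show "\<exists>u\<in>U k. F \<subseteq> u" if HF: "finite F \<and> F \<subseteq> X" for F
      proof -
        obtain g where g: "g \<in> D (k + Suc N)" "\<forall>x\<in>F. \<bar>g x - f x\<bar> < ee (k + Suc N)"
          using dense_approx[OF Dm f, of F "ee (k + Suc N)" "k + Suc N"] HF ee_pos by blast
        have "F \<subseteq> V k g" using g(2) HF unfolding V_def by blast
        moreover have "V k g \<in> U k" unfolding U_def using g(1) by blast
        ultimately show ?thesis by blast
      qed
      show "\<Union>(U k) = X"
      proof
        show "\<Union>(U k) \<subseteq> X" unfolding U_def using VX by blast
        show "X \<subseteq> \<Union>(U k)"
        proof
          fix x assume x: "x \<in> X"
          obtain g where g: "g \<in> D (k + Suc N)" "\<forall>y\<in>{x}. \<bar>g y - f y\<bar> < ee (k + Suc N)"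
            using dense_approx[OF Dm f, of "{x}" "ee (k + Suc N)" "k + Suc N"] x ee_pos by blast
          have "x \<in> V k g" using g(2) x unfolding V_def by blast
          moreover have "V k g \<in> U k" unfolding U_def using g(1) by blast
          ultimately show "x \<in> \<Union>(U k)" by blast
        qed
      qed
      show "X \<notin> U k"
      proof (rule notI)
        assume "X \<in> U k"
        then obtain g where g: "g \<in> D (k + Suc N)" "X = V k g" unfolding U_def by blast
        have "\<forall>x\<in>X. \<bar>g x - f x\<bar> < ee (k + Suc N)"
        proof
          fix x assume "x \<in> X"
          then have "x \<in> V k g" using g(2) by simp
          then show "\<bar>g x - f x\<bar> < ee (k + Suc N)" unfolding V_def by blast
        qed
        then have "k + Suc N \<in> I" unfolding I_def using g(1) by blast
        then show False using N by fastforce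
      qed
    qed
    obtain v where v: "\<forall>k. v k \<in> U k" "range v \<in> Borel_omega_covers X"
      using S UB unfolding S1_def by blast
    have "\<forall>k. \<exists>g. g \<in> D (k + Suc N) \<and> v k = V k g" using v(1) unfolding U_def by blast
    then obtain G where G: "\<forall>k. G k \<in> D (k + Suc N) \<and> v k = V k (G k)"
      using choice[of "\<lambda>k g. g \<in> D (k + Suc N) \<and> v k = V k g"] by blast
    define c where "c m = (if Suc N \<le> m then G (m - Suc N) else (SOME g. g \<in> D m))" for m
    have c1: "c m \<in> D m" for m
    proof (cases "Suc N \<le> m")
      case True
      then have "c m = G (m - Suc N)" unfolding c_def by simp
      moreover have "m - Suc N + Suc N = m" using True by simp
      ultimately show ?thesis using G by metis
    next
      case False then show ?thesis unfolding c_def using someI_ex[OF Dne[of m]] by simp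
    qed
    have ck: "c (k + Suc N) = G k" for k unfolding c_def by simp
    have vX: "v j \<subseteq> X" for j using G VX by blast
    have vne: "v j \<noteq> X" for j
    proof
      assume "v j = X"
      then have "X \<in> range v" by (metis rangeI)
      moreover have "X \<notin> range v" using v(2) unfolding Borel_omega_covers_def mem_Collect_eq by blast
      ultimately show False by blast
    qed
    have c2: "\<exists>m. \<forall>x\<in>F. \<bar>c m x - f x\<bar> < e" if HF: "finite F" "F \<subseteq> X" "e > 0" for F e
    proof -
      obtain K where K: "ee K < e" using ee_small[OF HF(3)] by blast
      define xs where "xs j = (SOME x. x \<in> X \<and> x \<notin> v j)" for j
      have xs: "xs j \<in> X \<and> xs j \<notin> v j" for j
      proof -
        have "\<exists>x. x \<in> X \<and> x \<notin> v j" using vX[of j] vne[of j] by blast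
        from someI_ex[OF this] show ?thesis unfolding xs_def .
      qed
      define F' where "F' = F \<union> xs ` {..<K}"
      have F'fin: "finite F'" unfolding F'_def using HF(1) by simp
      have F'X: "F' \<subseteq> X" unfolding F'_def using HF(2) xs by blast
      obtain k where k: "F' \<subseteq> v k"
      proof -
        have "\<exists>u\<in>range v. F' \<subseteq> u"
          using v(2) F'fin F'X unfolding Borel_omega_covers_def mem_Collect_eq by blast
        then show ?thesis using that by blast
      qed
      have kK: "K \<le> k"
      proof (rule ccontr)
        assume "\<not> K \<le> k"
        then have "xs k \<in> F'" unfolding F'_def by simp
        then show False using k xs[of k] by blast
      qed
      have "\<forall>x\<in>F. \<bar>c (k + Suc N) x - f x\<bar> < e"
      proof
        fix x assume x: "x \<in> F"
        then have "x \<in> v k" using k unfolding F'_def by blast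
        then have "x \<in> V k (G k)" using G by simp
        then have "\<bar>G k x - f x\<bar> < ee (k + Suc N)" unfolding V_def by blast
        also have "ee (k + Suc N) \<le> ee K" using kK by (intro ee_mono) simp
        finally show "\<bar>c (k + Suc N) x - f x\<bar> < e" using K ck by simp
      qed
      then show ?thesis by blast
    qed
    show ?thesis using crit[OF c1 c2] c1 by blast
  qed
qed

lemma dir2:
  assumes S: "S1 (Borel_omega_covers X) (Borel_omega_covers X)"
  shows "S1 (countable_dense (BX_top X)) (countable_dense (BX_top X))"
  unfolding S1_def
proof (intro allI impI)
  fix D :: "nat \<Rightarrow> (real \<Rightarrow> real) set" assume D: "\<forall>n. D n \<in> countable_dense (BX_top X)"
  have D0: "D 0 \<in> countable_dense (BX_top X)" using D by blast
  have D0ne: "D 0 \<noteq> {}"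
    using dense_approx[OF D0 zero_Borel, of "{}" 1] by auto
  have D0c: "countable (D 0)" using D0 unfolding countable_dense_def by blast
  define fk where "fk k = from_nat_into (D 0) k" for k
  have fkB: "fk k \<in> Borel_functions X" for k
    using from_nat_into[OF D0ne, of k] D_subset[OF D0] unfolding fk_def by blast
  have "\<forall>k. \<exists>c. (\<forall>m. c m \<in> D (prod_encode (k,m))) \<and> fk k \<in> BX_top X closure_of range c"
  proof
    fix k
    show "\<exists>c. (\<forall>m. c m \<in> D (prod_encode (k,m))) \<and> fk k \<in> BX_top X closure_of range c"
      by (rule selA[OF S fkB]) (use D in blast)
  qed
  then obtain C where C: "\<forall>k. (\<forall>m. C k m \<in> D (prod_encode (k,m))) \<and> fk k \<in> BX_top X closure_of range (C k)"
    using choice[of "\<lambda>k c. (\<forall>m. c m \<in> D (prod_encode (k,m))) \<and> fk k \<in> BX_top X closure_of range c"]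
    by blast
  define b where "b n = C (fst (prod_decode n)) (snd (prod_decode n))" for n
  have b1: "b n \<in> D n" for n
  proof -
    have "b n \<in> D (prod_encode (fst (prod_decode n), snd (prod_decode n)))"
      unfolding b_def using C by blast
    then show ?thesis by simp
  qed
  have Ck: "range (C k) \<subseteq> range b" for k
  proof
    fix y assume "y \<in> range (C k)"
    then obtain m where m: "y = C k m" by blast
    have "b (prod_encode (k,m)) = C k m" unfolding b_def by simp
    then show "y \<in> range b" using m by (metis rangeI)
  qed
  have sub: "range b \<subseteq> topspace (BX_top X)"
    using b1 D_subset D unfolding topspace_BX by blast
  have "D 0 \<subseteq> BX_top X closure_of range b"
  proof
    fix y assume "y \<in> D 0"
    then have "y \<in> range fk" unfolding fk_def using range_from_nat_into[OF D0ne D0c] by simp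
    then obtain k where k: "y = fk k" by blast
    have "fk k \<in> BX_top X closure_of range (C k)" using C by blast
    then show "y \<in> BX_top X closure_of range b" using closure_of_mono[OF Ck[of k]] k by blast
  qed
  then have "BX_top X closure_of D 0 \<subseteq> BX_top X closure_of range b"
    using closure_of_mono closure_of_closure_of by metis
  moreover have "BX_top X closure_of D 0 = topspace (BX_top X)"
    using D0 unfolding countable_dense_def dense_in_def by blast
  ultimately have "BX_top X closure_of range b = topspace (BX_top X)"
    using closure_of_subset_topspace[of "BX_top X" "range b"] by blast
  then have "range b \<in> countable_dense (BX_top X)"
    using sub unfolding countable_dense_def dense_in_def by simp
  then show "\<exists>b. (\<forall>n. b n \<in> D n) \<and> range b \<in> countable_dense (BX_top X)" using b1 by blast
qed

theorem theorem3p3: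
  fixes X :: "real set"
  shows "S1 (countable_dense (BX_top X)) (countable_dense (BX_top X)) \<longleftrightarrow>
         S1 (Borel_omega_covers X) (Borel_omega_covers X)"
  using dir1 dir2 by blast

end
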